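(* Let $P_1,\dots,P_m$ be Hermitian $n$-qubit Pauli operators, let $U_1,\dots,U_{m+1}$ be $n$-qubit Clifford unitaries, let $\beta\in\{-1,1\}^m$, and let $$E=U_{m+1}\cdot\frac{I+\beta_mP_m}{2}\cdot U_m\cdots U_2\cdot\frac{I+\beta_1P_1}{2}\cdot U_1 .$$ If $E^2=E$, then $E$ is a Hermitian (orthogonal) projector, i.e. $E^\dagger=E=E^2$.
   Context: An $n$-qubit Pauli operator is $c\,\sigma_1\otimes\cdots\otimes\sigma_n$ with $c\in\{\pm1,\pm i\}$ and $\sigma_j\in\{I,X,Y,Z\}$; it is Hermitian iff $c\in\{\pm1\}$. A unitary $U$ is Clifford if $UPU^\dagger$ is a Pauli operator for every Pauli operator $P$. *)

theory Defs
  imports "Jordan_Normal_Form.Schur_Decomposition"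
begin

definition kron :: "complex mat \<Rightarrow> complex mat \<Rightarrow> complex mat" where
  "kron A B = mat (dim_row A * dim_row B) (dim_col A * dim_col B)
     (\<lambda>(i, j). A $$ (i div dim_row B, j div dim_col B) * B $$ (i mod dim_row B, j mod dim_col B))"

datatype pauli = PI | PX | PY | PZ

definition pauli_mat :: "pauli \<Rightarrow> complex mat" where
  "pauli_mat s = (case s of
      PI \<Rightarrow> mat_of_rows_list 2 [[1, 0], [0, 1]]
    | PX \<Rightarrow> mat_of_rows_list 2 [[0, 1], [1, 0]]
    | PY \<Rightarrow> mat_of_rows_list 2 [[0, - \<i>], [\<i>, 0]]
    | PZ \<Rightarrow> mat_of_rows_list 2 [[1, 0], [0, -1]])"

definition pauli_string :: "pauli list \<Rightarrow> complex mat" where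
  "pauli_string ss = foldr (\<lambda>s M. kron (pauli_mat s) M) ss (1\<^sub>m 1)"

definition is_pauli :: "nat \<Rightarrow> complex mat \<Rightarrow> bool" where
  "is_pauli n P \<longleftrightarrow> (\<exists>c ss. c \<in> {1, -1, \<i>, -\<i>} \<and> length ss = n \<and> P = c \<cdot>\<^sub>m pauli_string ss)"

definition is_hermitian :: "complex mat \<Rightarrow> bool" where
  "is_hermitian A \<longleftrightarrow> mat_adjoint A = A"

definition is_unitary :: "nat \<Rightarrow> complex mat \<Rightarrow> bool" where
  "is_unitary d U \<longleftrightarrow> U \<in> carrier_mat d d \<and> mat_adjoint U * U = 1\<^sub>m d \<and> U * mat_adjoint U = 1\<^sub>m d"

definition is_clifford :: "nat \<Rightarrow> complex mat \<Rightarrow> bool" where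
  "is_clifford n U \<longleftrightarrow> is_unitary (2 ^ n) U \<and>
     (\<forall>P. is_pauli n P \<longrightarrow> is_pauli n (U * P * mat_adjoint U))"

text \<open>E_k = U_{k+1} (I + beta_k P_k)/2 U_k ... U_2 (I + beta_1 P_1)/2 U_1; indices start at 1.\<close>
fun chain_op :: "nat \<Rightarrow> (nat \<Rightarrow> complex mat) \<Rightarrow> (nat \<Rightarrow> complex mat) \<Rightarrow> (nat \<Rightarrow> int) \<Rightarrow> nat \<Rightarrow> complex mat" where
  "chain_op n U P \<beta> 0 = U 1"
| "chain_op n U P \<beta> (Suc k) =
     U (k + 2) * ((1 / 2 :: complex) \<cdot>\<^sub>m (1\<^sub>m (2 ^ n) + of_int (\<beta> (k + 1)) \<cdot>\<^sub>m P (k + 1)))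
       * chain_op n U P \<beta> k"

end

theory Submission
  imports Defs
begin


definition ip :: "complex vec \<Rightarrow> complex vec \<Rightarrow> complex" where
  "ip u v = (\<Sum>i<dim_vec v. cnj (u$i) * v$i)"

lemma ip_add_r: "u \<in> carrier_vec d \<Longrightarrow> v \<in> carrier_vec d \<Longrightarrow> w \<in> carrier_vec d \<Longrightarrow>
  ip u (v + w) = ip u v + ip u w"
  by (auto simp: ip_def distrib_left sum.distrib)

lemma ip_add_l: "u \<in> carrier_vec d \<Longrightarrow> v \<in> carrier_vec d \<Longrightarrow> w \<in> carrier_vec d \<Longrightarrow>
  ip (u + w) v = ip u v + ip w v"
  by (auto simp: ip_def distrib_right sum.distrib)

lemma ip_smult_r: "u \<in> carrier_vec d \<Longrightarrow> v \<in> carrier_vec d \<Longrightarrow>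
  ip u (c \<cdot>\<^sub>v v) = c * ip u v"
  by (auto simp: ip_def sum_distrib_left ac_simps)

lemma ip_smult_l: "u \<in> carrier_vec d \<Longrightarrow> v \<in> carrier_vec d \<Longrightarrow>
  ip (c \<cdot>\<^sub>v u) v = cnj c * ip u v"
  by (auto simp: ip_def sum_distrib_left ac_simps)

lemma ip_cnj: "u \<in> carrier_vec d \<Longrightarrow> v \<in> carrier_vec d \<Longrightarrow> cnj (ip u v) = ip v u"
  by (auto simp: ip_def ac_simps)

lemma ip_self_real: "Im (ip v v) = 0"
  unfolding ip_def by (simp add: Im_sum)

lemma ip_self_nonneg: "Re (ip v v) \<ge> 0"
  unfolding ip_def by (simp add: Re_sum sum_nonneg)

lemma ip_self_eq: "ip v v = of_real (Re (ip v v))"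
  using ip_self_real by (simp add: complex_eq_iff)

lemma ip_self_zero: assumes "v \<in> carrier_vec d" "Re (ip v v) = 0" shows "v = 0\<^sub>v d"
proof (rule eq_vecI)
  have h: "\<And>z::complex. Re (cnj z * z) = (cmod z)^2" by (simp add: cmod_power2 power2_eq_square[symmetric])
  have "(\<Sum>i<d. (cmod (v$i))^2) = 0"
    using assms(2) assms(1) unfolding ip_def Re_sum h by simp
  hence "\<forall>i\<in>{..<d}. (cmod (v$i))^2 = 0"
    by (subst sum_nonneg_eq_0_iff[symmetric]) auto
  thus "\<And>i. i < dim_vec (0\<^sub>v d) \<Longrightarrow> v $ i = 0\<^sub>v d $ i" by auto
  show "dim_vec v = dim_vec (0\<^sub>v d)" using assms by auto
qed

lemma ip_unit: assumes "i < d" "v \<in> carrier_vec d" shows "ip (unit_vec d i) v = v $ i"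
proof -
  have "ip (unit_vec d i) v = (\<Sum>j<d. if j = i then v $ i else 0)"
    unfolding ip_def using assms by (intro sum.cong) (auto simp: unit_vec_def)
  thus ?thesis using \<open>i < d\<close> by simp
qed

lemma ip_adj: assumes A: "A \<in> carrier_mat d d" and u: "u \<in> carrier_vec d" and v: "v \<in> carrier_vec d"
  shows "ip (A *\<^sub>v u) v = ip u (mat_adjoint A *\<^sub>v v)"
proof -
  have adj: "\<And>i j. i < d \<Longrightarrow> j < d \<Longrightarrow> mat_adjoint A $$ (i,j) = cnj (A $$ (j,i))"
    using A unfolding mat_adjoint_def by (simp add: mat_of_rows_def)
  have dA: "dim_row (mat_adjoint A) = d"  "dim_col (mat_adjoint A) = d"
    using A unfolding mat_adjoint_def by (auto simp: mat_of_rows_def)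
  have "ip (A *\<^sub>v u) v = (\<Sum>i<d. cnj (\<Sum>j<d. A $$ (i,j) * u $ j) * v $ i)"
    using A u v unfolding ip_def by (simp add: scalar_prod_def lessThan_atLeast0)
  also have "\<dots> = (\<Sum>i<d. \<Sum>j<d. cnj (A $$ (i,j)) * cnj (u $ j) * v $ i)"
    by (simp add: sum_distrib_right)
  also have "\<dots> = (\<Sum>j<d. \<Sum>i<d. cnj (A $$ (i,j)) * cnj (u $ j) * v $ i)"
    by (rule sum.swap)
  also have "\<dots> = (\<Sum>j<d. cnj (u $ j) * (\<Sum>i<d. mat_adjoint A $$ (j,i) * v $ i))"
    by (simp add: sum_distrib_left adj ac_simps)
  also have "\<dots> = ip u (mat_adjoint A *\<^sub>v v)"
    using A u v dA unfolding ip_def by (simp add: scalar_prod_def lessThan_atLeast0)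
  finally show ?thesis .
qed

lemma mat_vec_unit: fixes A :: "complex mat" assumes "A \<in> carrier_mat d d" "i < d" "j < d"
  shows "(A *\<^sub>v unit_vec d j) $ i = A $$ (i,j)"
proof -
  have "(A *\<^sub>v unit_vec d j) $ i = (\<Sum>k\<in>{0..<d}. if k = j then A $$ (i,j) else 0)"
  proof -
    have "(A *\<^sub>v unit_vec d j) $ i = row A i \<bullet> unit_vec d j" using assms by simp
    also have "\<dots> = (\<Sum>k\<in>{0..<d}. row A i $ k * unit_vec d j $ k)" by (simp add: scalar_prod_def)
    also have "\<dots> = (\<Sum>k\<in>{0..<d}. if k = j then A $$ (i,j) else 0)" using assms by (intro sum.cong) auto
    finally show ?thesis .
  qed
  thus ?thesis using assms by simp
qed

lemma adj_carrier: "A \<in> carrier_mat d d \<Longrightarrow> mat_adjoint A \<in> carrier_mat d d"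
  unfolding mat_adjoint_def by (auto simp: mat_of_rows_def)

lemma selfadj_herm: assumes A: "A \<in> carrier_mat d d"
  and sa: "\<And>u v. u \<in> carrier_vec d \<Longrightarrow> v \<in> carrier_vec d \<Longrightarrow> ip (A *\<^sub>v u) v = ip u (A *\<^sub>v v)"
  shows "mat_adjoint A = A"
proof -
  have Ad: "mat_adjoint A \<in> carrier_mat d d" using adj_carrier[OF A] .
  have vv: "mat_adjoint A *\<^sub>v v = A *\<^sub>v v" if v: "v \<in> carrier_vec d" for v
  proof (rule eq_vecI)
    fix i assume "i < dim_vec (A *\<^sub>v v)"
    hence i: "i < d" using A by simp
    have "ip (unit_vec d i) (mat_adjoint A *\<^sub>v v) = ip (unit_vec d i) (A *\<^sub>v v)"
      using ip_adj[OF A unit_vec_carrier v] sa[OF unit_vec_carrier v] by simp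
    thus "(mat_adjoint A *\<^sub>v v) $ i = (A *\<^sub>v v) $ i"
      using ip_unit[OF i] A Ad v by simp
  qed (insert A Ad, auto)
  show ?thesis
  proof (rule eq_matI)
    fix i j assume "i < dim_row A" "j < dim_col A"
    hence i: "i < d" and j: "j < d" using A by auto
    show "mat_adjoint A $$ (i, j) = A $$ (i, j)"
      using mat_vec_unit[OF Ad i j] mat_vec_unit[OF A i j] vv[OF unit_vec_carrier[of d j]] by simp
  qed (insert A Ad, auto)
qed

definition nrm :: "complex vec \<Rightarrow> real" where "nrm v = Re (ip v v)"

definition contr :: "nat \<Rightarrow> complex mat \<Rightarrow> bool" where
  "contr d A \<longleftrightarrow> A \<in> carrier_mat d d \<and> (\<forall>v \<in> carrier_vec d. nrm (A *\<^sub>v v) \<le> nrm v)"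

lemma key_calc: fixes a t :: complex and r :: real assumes r: "r > 0" and t: "t = - a / of_real r"
  shows "Re (t * cnj a + cnj t * a + cnj t * t * of_real r) = - ((cmod a)^2 / r)"
  using r unfolding t cmod_power2 by (simp add: field_simps power2_eq_square)

lemma orth_lemma: assumes E: "contr d E" and idem: "E * E = E"
  and u: "u \<in> carrier_vec d" and v: "v \<in> carrier_vec d"
  shows "ip (E *\<^sub>v u) (v + (-1) \<cdot>\<^sub>v (E *\<^sub>v v)) = 0"
proof -
  have Ec: "E \<in> carrier_mat d d" using E contr_def by auto
  define x where "x = E *\<^sub>v u"
  define y where "y = v + (-1) \<cdot>\<^sub>v (E *\<^sub>v v)"
  have xc: "x \<in> carrier_vec d" and yc: "y \<in> carrier_vec d" using Ec u v by (auto simp: x_def y_def)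
  have EEv: "E *\<^sub>v (E *\<^sub>v w) = E *\<^sub>v w" if "w \<in> carrier_vec d" for w
    using assoc_mult_mat_vec[OF Ec Ec that] idem by simp
  have Ex: "E *\<^sub>v x = x" using EEv[OF u] x_def by simp
  have Ey: "E *\<^sub>v y = 0\<^sub>v d"
  proof -
    have "E *\<^sub>v y = E *\<^sub>v v + (-1) \<cdot>\<^sub>v (E *\<^sub>v v)"
      unfolding y_def using Ec v by (simp add: mult_add_distrib_mat_vec mult_mat_vec EEv)
    also have "\<dots> = 0\<^sub>v d" using Ec v by (intro eq_vecI) auto
    finally show ?thesis .
  qed
  have ineq: "nrm x \<le> nrm (x + t \<cdot>\<^sub>v y)" for t
  proof -
    have "E *\<^sub>v (x + t \<cdot>\<^sub>v y) = x"
      using Ec xc yc Ex Ey by (simp add: mult_add_distrib_mat_vec mult_mat_vec) (rule eq_vecI, auto)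
    moreover have "x + t \<cdot>\<^sub>v y \<in> carrier_vec d" using xc yc by simp
    ultimately show ?thesis using E unfolding contr_def by metis
  qed
  define a where "a = ip y x"
  have b: "ip x y = cnj a" using ip_cnj[OF yc xc] a_def by simp
  have "a = 0"
  proof (cases "Re (ip y y) = 0")
    case True
    hence "y = 0\<^sub>v d" using ip_self_zero[OF yc] by simp
    thus ?thesis unfolding a_def ip_def using xc by simp
  next
    case False
    define r where "r = Re (ip y y)"
    have r: "r > 0" using False ip_self_nonneg[of y] r_def by simp
    have yy: "ip y y = of_real r" using ip_self_eq[of y] r_def by simp
    define t where "t = - a / of_real r"
    have "ip (x + t \<cdot>\<^sub>v y) (x + t \<cdot>\<^sub>v y) = ip x x + (t * cnj a + cnj t * a + cnj t * t * of_real r)"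
      using xc yc b yy by (simp add: ip_add_l[of _ d] ip_add_r[of _ d] ip_smult_l[of _ d] ip_smult_r[of _ d] a_def algebra_simps)
    hence "nrm (x + t \<cdot>\<^sub>v y) = nrm x - (cmod a)^2 / r"
      using key_calc[OF r t_def] unfolding nrm_def by simp
    hence "(cmod a)^2 / r \<le> 0" using ineq[of t] by simp
    hence "(cmod a)^2 \<le> 0" using r by (simp add: divide_le_0_iff)
    thus ?thesis by simp
  qed
  thus ?thesis using b x_def y_def by simp
qed

lemma idem_contr_herm: assumes E: "contr d E" and idem: "E * E = E"
  shows "mat_adjoint E = E"
proof -
  have Ec: "E \<in> carrier_mat d d" using E contr_def by auto
  have split: "ip (E *\<^sub>v u) v = ip (E *\<^sub>v u) (E *\<^sub>v v)" if u: "u \<in> carrier_vec d" and v: "v \<in> carrier_vec d" for u v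
  proof -
    have "0 = ip (E *\<^sub>v u) (v + (-1) \<cdot>\<^sub>v (E *\<^sub>v v))" using orth_lemma[OF E idem u v] by simp
    also have "\<dots> = ip (E *\<^sub>v u) v - ip (E *\<^sub>v u) (E *\<^sub>v v)"
      using Ec u v by (simp add: ip_add_r[of _ d] ip_smult_r[of _ d])
    finally show ?thesis by simp
  qed
  show ?thesis
  proof (rule selfadj_herm[OF Ec])
    fix u v :: "complex vec" assume u: "u \<in> carrier_vec d" and v: "v \<in> carrier_vec d"
    have "ip u (E *\<^sub>v v) = cnj (ip (E *\<^sub>v v) u)" using ip_cnj[of "E *\<^sub>v v" d u] Ec u v by simp
    also have "\<dots> = cnj (ip (E *\<^sub>v v) (E *\<^sub>v u))" using split[OF v u] by simp
    also have "\<dots> = ip (E *\<^sub>v u) (E *\<^sub>v v)" using ip_cnj[of "E *\<^sub>v v" d "E *\<^sub>v u"] Ec u v by simp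
    finally show "ip (E *\<^sub>v u) v = ip u (E *\<^sub>v v)" using split[OF u v] by simp
  qed
qed

lemma contr_mult: assumes A: "contr d A" and B: "contr d B" shows "contr d (A * B)"
proof -
  have Ac: "A \<in> carrier_mat d d" and Bc: "B \<in> carrier_mat d d" using A B contr_def by auto
  show ?thesis unfolding contr_def
  proof (intro conjI ballI)
    show "A * B \<in> carrier_mat d d" using Ac Bc by simp
    fix v :: "complex vec" assume v: "v \<in> carrier_vec d"
    have "nrm ((A * B) *\<^sub>v v) = nrm (A *\<^sub>v (B *\<^sub>v v))" using Ac Bc v by simp
    also have "\<dots> \<le> nrm (B *\<^sub>v v)" using A Bc v unfolding contr_def by auto
    also have "\<dots> \<le> nrm v" using B v unfolding contr_def by auto
    finally show "nrm ((A * B) *\<^sub>v v) \<le> nrm v" .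
  qed
qed

lemma unitary_contr: assumes U: "is_unitary d U" shows "contr d U"
proof -
  have Uc: "U \<in> carrier_mat d d" and UU: "mat_adjoint U * U = 1\<^sub>m d" using U is_unitary_def by auto
  have Ua: "mat_adjoint U \<in> carrier_mat d d" using adj_carrier[OF Uc] .
  show ?thesis unfolding contr_def
  proof (intro conjI ballI)
    fix v :: "complex vec" assume v: "v \<in> carrier_vec d"
    have "ip (U *\<^sub>v v) (U *\<^sub>v v) = ip v (mat_adjoint U *\<^sub>v (U *\<^sub>v v))"
      using ip_adj[OF Uc v] Uc v by simp
    also have "\<dots> = ip v ((mat_adjoint U * U) *\<^sub>v v)" using Ua Uc v by simp
    also have "\<dots> = ip v v" using UU v by simp
    finally show "nrm (U *\<^sub>v v) \<le> nrm v" unfolding nrm_def by simp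
  qed (rule Uc)
qed

lemma proj_contr: assumes Pc: "Q \<in> carrier_mat d d"
  and sa: "\<And>u v. u \<in> carrier_vec d \<Longrightarrow> v \<in> carrier_vec d \<Longrightarrow> ip (Q *\<^sub>v u) v = ip u (Q *\<^sub>v v)"
  and id: "\<And>v. v \<in> carrier_vec d \<Longrightarrow> Q *\<^sub>v (Q *\<^sub>v v) = Q *\<^sub>v v"
  shows "contr d Q"
  unfolding contr_def
proof (intro conjI ballI)
  fix v :: "complex vec" assume v: "v \<in> carrier_vec d"
  define w where "w = Q *\<^sub>v v"
  have wc: "w \<in> carrier_vec d" using Pc v w_def by simp
  have ww: "ip w w = ip v w" using sa[OF v wc] id[OF v] w_def by simp
  have wv: "ip w v = ip v w" using sa[OF v v] w_def by simp
  have "ip (v + (-1) \<cdot>\<^sub>v w) (v + (-1) \<cdot>\<^sub>v w) = ip v v - ip w w"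
    using v wc ww wv by (simp add: ip_add_l[of _ d] ip_add_r[of _ d] ip_smult_l[of _ d] ip_smult_r[of _ d])
  hence "nrm v - nrm w \<ge> 0" using ip_self_nonneg[of "v + (-1) \<cdot>\<^sub>v w"] unfolding nrm_def by simp
  thus "nrm (Q *\<^sub>v v) \<le> nrm v" using w_def by simp
qed (rule Pc)

lemma smult_mat_vec: "A \<in> carrier_mat d d \<Longrightarrow> v \<in> carrier_vec d \<Longrightarrow> (c \<cdot>\<^sub>m A) *\<^sub>v v = c \<cdot>\<^sub>v (A *\<^sub>v (v :: complex vec))"
  by (rule eq_vecI) (auto simp: scalar_prod_def sum_distrib_left ac_simps)

lemma aux_half: fixes b x y :: complex assumes "b * b = 1"
  shows "(1/2) * ((1/2) * (x + b * y) + b * ((1/2) * (y + b * x))) = (1/2) * (x + b * y)"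
proof -
  have "(1/2) * ((1/2) * (x + b * y) + b * ((1/2) * (y + b * x))) = (1/2) * (x + b * y) + (b * b - 1) * x / 4"
    by (simp add: field_simps)
  thus ?thesis using assms by simp
qed

lemma pauli_proj_contr: assumes Pc: "P \<in> carrier_mat d d" and Ph: "mat_adjoint P = P"
  and PP: "P * P = 1\<^sub>m d" and b: "b \<in> {-1, 1::complex}"
  shows "contr d ((1/2 :: complex) \<cdot>\<^sub>m (1\<^sub>m d + b \<cdot>\<^sub>m P))"
proof -
  define Q where "Q = (1/2 :: complex) \<cdot>\<^sub>m (1\<^sub>m d + b \<cdot>\<^sub>m P)"
  have Qc: "Q \<in> carrier_mat d d" using Pc Q_def by simp
  have Qv: "Q *\<^sub>v v = (1/2) \<cdot>\<^sub>v (v + b \<cdot>\<^sub>v (P *\<^sub>v v))" if v: "v \<in> carrier_vec d" for v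
  proof -
    have "(1\<^sub>m d + b \<cdot>\<^sub>m P) *\<^sub>v v = 1\<^sub>m d *\<^sub>v v + (b \<cdot>\<^sub>m P) *\<^sub>v v"
      by (rule add_mult_distrib_mat_vec) (use Pc v in auto)
    also have "\<dots> = v + b \<cdot>\<^sub>v (P *\<^sub>v v)" using Pc v smult_mat_vec[OF Pc v] by simp
    finally show ?thesis unfolding Q_def using smult_mat_vec[of "1\<^sub>m d + b \<cdot>\<^sub>m P" d v "1/2"] Pc v by simp
  qed
  have Qi: "(Q *\<^sub>v v) $ i = (1/2) * (v $ i + b * (P *\<^sub>v v) $ i)" if v: "v \<in> carrier_vec d" and i: "i < d" for v i
    using Qv[OF v] Pc v i by simp
  have PPv: "P *\<^sub>v (P *\<^sub>v v) = v" if v: "v \<in> carrier_vec d" for v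
    using assoc_mult_mat_vec[OF Pc Pc v, symmetric] PP v by simp
  have cb: "cnj b = b" "b * b = 1" using b by auto
  have Psa: "ip (P *\<^sub>v u) v = ip u (P *\<^sub>v v)" if "u \<in> carrier_vec d" "v \<in> carrier_vec d" for u v
    using ip_adj[OF Pc that] Ph by simp
  show ?thesis unfolding Q_def[symmetric]
  proof (rule proj_contr[OF Qc])
    fix u v :: "complex vec" assume u: "u \<in> carrier_vec d" and v: "v \<in> carrier_vec d"
    show "ip (Q *\<^sub>v u) v = ip u (Q *\<^sub>v v)"
      using u v Pc Psa[OF u v] cb unfolding Qv[OF u] Qv[OF v]
      by (simp add: ip_add_l[of _ d] ip_add_r[of _ d] ip_smult_l[of _ d] ip_smult_r[of _ d])
  next
    fix v :: "complex vec" assume v: "v \<in> carrier_vec d"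
    have w: "Q *\<^sub>v v \<in> carrier_vec d" using Qc v by simp
    have PQ: "P *\<^sub>v (Q *\<^sub>v v) = (1/2) \<cdot>\<^sub>v (P *\<^sub>v v + b \<cdot>\<^sub>v v)"
      using Pc v PPv[OF v] unfolding Qv[OF v]
      by (simp add: mult_mat_vec[of _ d d] mult_add_distrib_mat_vec[of _ d d])
    show "Q *\<^sub>v (Q *\<^sub>v v) = Q *\<^sub>v v"
    proof (rule eq_vecI)
      fix i assume "i < dim_vec (Q *\<^sub>v v)"
      hence i: "i < d" using Qc by simp
      have "(Q *\<^sub>v (Q *\<^sub>v v)) $ i = (1/2) * ((Q *\<^sub>v v) $ i + b * (P *\<^sub>v (Q *\<^sub>v v)) $ i)"
        using Qi[OF w i] .
      also have "\<dots> = (1/2) * ((1/2) * (v $ i + b * (P *\<^sub>v v) $ i) + b * ((1/2) * ((P *\<^sub>v v) $ i + b * v $ i)))"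
        using Qi[OF v i] PQ i Pc v by simp
      also have "\<dots> = (1/2) * (v $ i + b * (P *\<^sub>v v) $ i)" by (rule aux_half[OF cb(2)])
      also have "\<dots> = (Q *\<^sub>v v) $ i" using Qi[OF v i] by simp
      finally show "(Q *\<^sub>v (Q *\<^sub>v v)) $ i = (Q *\<^sub>v v) $ i" .
    qed (insert Qc, auto)
  qed
qed



lemma sum_split: fixes a b :: nat and f :: "nat \<Rightarrow> 'a::comm_monoid_add" shows "(\<Sum>k<a*b. f k) = (\<Sum>x<a. \<Sum>y<b. f (x*b + y))"
proof -
  have "(\<Sum>k<a*b. f k) = (\<Sum>x<a. sum f {x*b..<x*b+b})" using sum.nat_group[of f b a] by simp
  also have "\<dots> = (\<Sum>x<a. \<Sum>y<b. f (x*b + y))"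
  proof (rule sum.cong[OF refl])
    fix x
    have "sum f {x*b..<x*b+b} = sum f {0 + x*b..<b + x*b}" by (simp add: add.commute)
    also have "\<dots> = sum (f \<circ> plus (x*b)) {0..<b}" by (rule sum.atLeastLessThan_shift_bounds)
    finally show "sum f {x*b..<x*b+b} = (\<Sum>y<b. f (x*b + y))" by (simp add: atLeast0LessThan)
  qed
  finally show ?thesis .
qed

lemma kron_carrier: "kron A B \<in> carrier_mat (dim_row A * dim_row B) (dim_col A * dim_col B)"
  unfolding kron_def by simp

lemma kron_index: "i < dim_row A * dim_row B \<Longrightarrow> j < dim_col A * dim_col B \<Longrightarrow>
  kron A B $$ (i,j) = A $$ (i div dim_row B, j div dim_col B) * B $$ (i mod dim_row B, j mod dim_col B)"
  unfolding kron_def by simp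

lemma kron_mult: assumes A: "A \<in> carrier_mat a1 a2" and B: "B \<in> carrier_mat b1 b2"
  and C: "C \<in> carrier_mat a2 a3" and D: "D \<in> carrier_mat b2 b3"
  shows "kron A B * kron C D = kron (A * C) (B * D)"
proof (rule eq_matI)
  show "dim_row (kron A B * kron C D) = dim_row (kron (A * C) (B * D))"
    "dim_col (kron A B * kron C D) = dim_col (kron (A * C) (B * D))"
    using A B C D unfolding kron_def by auto
  fix i j assume "i < dim_row (kron (A * C) (B * D))" "j < dim_col (kron (A * C) (B * D))"
  hence i: "i < a1 * b1" and j: "j < a3 * b3" using A B C D unfolding kron_def by auto
  have b1: "b1 > 0" and b3: "b3 > 0" using i j by (auto intro: ccontr)
  have id: "i div b1 < a1" "j div b3 < a3" "i mod b1 < b1" "j mod b3 < b3"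
    using i j b1 b3 by (auto simp: less_mult_imp_div_less mult.commute)
  have "(kron A B * kron C D) $$ (i,j) = (\<Sum>k<a2*b2. kron A B $$ (i,k) * kron C D $$ (k,j))"
    using A B C D i j unfolding kron_def by (simp add: scalar_prod_def atLeast0LessThan)
  also have "\<dots> = (\<Sum>x<a2. \<Sum>y<b2. kron A B $$ (i,x*b2+y) * kron C D $$ (x*b2+y,j))"
    by (rule sum_split)
  also have "\<dots> = (\<Sum>x<a2. \<Sum>y<b2. (A $$ (i div b1, x) * C $$ (x, j div b3)) * (B $$ (i mod b1, y) * D $$ (y, j mod b3)))"
  proof (intro sum.cong refl)
    fix x y assume x: "x \<in> {..<a2}" and y: "y \<in> {..<b2}"
    have "(x+1)*b2 \<le> a2*b2" using x by (intro mult_right_mono) auto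
    hence k: "x*b2 + y < a2 * b2" using y by simp
    have dm: "(x*b2+y) div b2 = x" "(x*b2+y) mod b2 = y" using y by auto
    show "kron A B $$ (i,x*b2+y) * kron C D $$ (x*b2+y,j) =
      (A $$ (i div b1, x) * C $$ (x, j div b3)) * (B $$ (i mod b1, y) * D $$ (y, j mod b3))"
      using A B C D i j k dm by (simp add: kron_index)
  qed
  also have "\<dots> = (\<Sum>x<a2. A $$ (i div b1, x) * C $$ (x, j div b3)) * (\<Sum>y<b2. B $$ (i mod b1, y) * D $$ (y, j mod b3))"
    by (simp add: sum_product)
  also have "\<dots> = (A * C) $$ (i div b1, j div b3) * (B * D) $$ (i mod b1, j mod b3)"
    using A B C D id by (simp add: scalar_prod_def atLeast0LessThan)
  also have "\<dots> = kron (A * C) (B * D) $$ (i,j)"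
    using A B C D i j by (simp add: kron_index)
  finally show "(kron A B * kron C D) $$ (i,j) = kron (A * C) (B * D) $$ (i,j)" .
qed

lemma kron_one: "b > 0 \<Longrightarrow> kron (1\<^sub>m a) (1\<^sub>m b) = 1\<^sub>m (a * b)"
proof (rule eq_matI)
  fix i j assume "b > 0" "i < dim_row (1\<^sub>m (a * b) :: complex mat)" "j < dim_col (1\<^sub>m (a * b) :: complex mat)"
  hence i: "i < a*b" and j: "j < a*b" and b: "b > 0" by auto
  have "(i div b = j div b \<and> i mod b = j mod b) = (i = j)"
    by (metis div_mult_mod_eq)
  moreover have "i div b < a" "j div b < a" using i j b by (auto simp: less_mult_imp_div_less)
  ultimately show "kron (1\<^sub>m a) (1\<^sub>m b) $$ (i, j) = 1\<^sub>m (a * b) $$ (i, j)"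
    using i j b by (simp add: kron_index) (metis div_mult_mod_eq)
qed (auto simp: kron_def)

lemma pauli_carrier: "pauli_mat s \<in> carrier_mat 2 2"
  by (cases s) (auto simp: pauli_mat_def mat_of_rows_list_def)

lemma pauli_sq: "pauli_mat s * pauli_mat s = 1\<^sub>m 2"
proof (rule eq_matI)
  fix i j assume "i < dim_row (1\<^sub>m 2 :: complex mat)" "j < dim_col (1\<^sub>m 2 :: complex mat)"
  hence "i < 2" "j < 2" by auto
  hence "i = 0 \<or> i = 1" "j = 0 \<or> j = 1" by auto
  thus "(pauli_mat s * pauli_mat s) $$ (i, j) = 1\<^sub>m 2 $$ (i, j)"
    by (cases s) (auto simp: pauli_mat_def mat_of_rows_list_def scalar_prod_def numeral_2_eq_2)
qed (insert pauli_carrier[of s], auto)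

lemma pauli_string_props: "pauli_string ss \<in> carrier_mat (2^length ss) (2^length ss) \<and>
  pauli_string ss * pauli_string ss = 1\<^sub>m (2^length ss)"
proof (induction ss)
  case Nil
  show ?case unfolding pauli_string_def by simp
next
  case (Cons s ss)
  have e: "pauli_string (s # ss) = kron (pauli_mat s) (pauli_string ss)"
    unfolding pauli_string_def by simp
  have c: "pauli_string ss \<in> carrier_mat (2^length ss) (2^length ss)" using Cons by simp
  have "pauli_string (s # ss) \<in> carrier_mat (2^length (s#ss)) (2^length (s#ss))"
    using kron_carrier[of "pauli_mat s" "pauli_string ss"] c pauli_carrier[of s] e by auto
  moreover have "pauli_string (s # ss) * pauli_string (s # ss) = 1\<^sub>m (2^length (s#ss))"
    unfolding e using kron_mult[OF pauli_carrier c pauli_carrier c] pauli_sq Cons kron_one[of "2^length ss" 2]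
    by simp
  ultimately show ?case by simp
qed


lemma herm_pauli_sq: assumes "is_pauli n P" "is_hermitian P"
  shows "P \<in> carrier_mat (2^n) (2^n) \<and> P * P = 1\<^sub>m (2^n)"
proof -
  obtain c ss where c: "c \<in> {1, -1, \<i>, -\<i>}" and l: "length ss = n" and P: "P = c \<cdot>\<^sub>m pauli_string ss"
    using assms(1) unfolding is_pauli_def by auto
  define d :: nat where "d = 2^n"
  have S: "pauli_string ss \<in> carrier_mat d d" "pauli_string ss * pauli_string ss = 1\<^sub>m d"
    using pauli_string_props[of ss] l d_def by auto
  have Pc: "P \<in> carrier_mat d d" using S P by simp
  have PP: "P * P = (c * c) \<cdot>\<^sub>m 1\<^sub>m d"
    unfolding P using S by (simp add: mult_smult_distrib[of _ d d _ d] mult_smult_assoc_mat[of _ d d _ d]) (rule eq_matI, auto)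
  have d0: "0 < d" using d_def by simp
  define v :: "complex vec" where "v = unit_vec d 0"
  have v: "v \<in> carrier_vec d" using v_def by simp
  have "ip (P *\<^sub>v v) (P *\<^sub>v v) = ip v (mat_adjoint P *\<^sub>v (P *\<^sub>v v))" using ip_adj[OF Pc v] Pc v by simp
  also have "\<dots> = ip v ((P * P) *\<^sub>v v)" using assms(2) Pc v unfolding is_hermitian_def by simp
  also have "\<dots> = (c * c) * ip v v" unfolding PP using v ip_smult_r[of v d] smult_mat_vec[OF one_carrier_mat v] by simp
  also have "ip v v = 1" using ip_unit[OF d0 v] v_def d0 by simp
  finally have "Re (ip (P *\<^sub>v v) (P *\<^sub>v v)) = Re (c * c)" by simp
  hence "Re (c * c) \<ge> 0" using ip_self_nonneg by metis
  hence "c * c = 1" using c by auto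
  moreover have "(1::complex) \<cdot>\<^sub>m 1\<^sub>m d = 1\<^sub>m d" by (rule eq_matI) auto
  ultimately show ?thesis using Pc PP d_def by simp
qed

lemma chain_contr:
  assumes P_pauli: "\<forall>i \<in> {1..m}. is_pauli n (P i) \<and> is_hermitian (P i)"
    and U_cliff: "\<forall>i \<in> {1..m + 1}. is_clifford n (U i)"
    and \<beta>_sign: "\<forall>i \<in> {1..m}. \<beta> i \<in> {-1, 1}"
  shows "k \<le> m \<Longrightarrow> contr (2^n) (chain_op n U P \<beta> k)"
proof (induction k)
  case 0
  thus ?case using U_cliff unfolding is_clifford_def by (auto intro: unitary_contr)
next
  case (Suc k)
  have U: "contr (2^n) (U (k+2))" using U_cliff Suc.prems unfolding is_clifford_def by (auto intro: unitary_contr)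
  have Pk: "P (k+1) \<in> carrier_mat (2^n) (2^n) \<and> P (k+1) * P (k+1) = 1\<^sub>m (2^n)"
    using herm_pauli_sq P_pauli Suc.prems by auto
  have Ph: "mat_adjoint (P (k+1)) = P (k+1)" using P_pauli Suc.prems unfolding is_hermitian_def by auto
  have b: "(of_int (\<beta> (k+1)) :: complex) \<in> {-1, 1}" using \<beta>_sign Suc.prems by force
  have Q: "contr (2^n) ((1/2 :: complex) \<cdot>\<^sub>m (1\<^sub>m (2^n) + of_int (\<beta> (k+1)) \<cdot>\<^sub>m P (k+1)))"
    using pauli_proj_contr[OF _ Ph _ b] Pk by auto
  have C: "contr (2^n) (chain_op n U P \<beta> k)" using Suc by simp
  show ?case using contr_mult[OF contr_mult[OF U Q] C] by simp
qed

theorem mainTheorem8: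
  fixes n m :: nat and P U :: "nat \<Rightarrow> complex mat" and \<beta> :: "nat \<Rightarrow> int" and E :: "complex mat"
  assumes P_pauli: "\<forall>i \<in> {1..m}. is_pauli n (P i) \<and> is_hermitian (P i)"
    and U_cliff: "\<forall>i \<in> {1..m + 1}. is_clifford n (U i)"
    and \<beta>_sign: "\<forall>i \<in> {1..m}. \<beta> i \<in> {-1, 1}"
    and E_def: "E = chain_op n U P \<beta> m"
    and idem: "E * E = E"
  shows "mat_adjoint E = E \<and> E * E = E"
  using idem_contr_herm[OF chain_contr[OF P_pauli U_cliff \<beta>_sign le_refl, folded E_def] idem] idem by simp

end
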